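(* Let $f:\mathbb{R}^d\times\mathbb{R}^d\to\mathbb{R}$ be $C^2$-smooth with $L$-Lipschitz gradient and $L$-Lipschitz Hessian, let $\epsilon>0$, $\sigma>0$, and suppose $\|\nabla_y f(x^\star,y^\star)\|\le\epsilon$ for some $x^\star,y^\star\in\mathbb{R}^d$. Then $\mathbb{E}_{\zeta\sim N(0,I_d)}[\|\nabla_y f(x^\star+\sigma\zeta,y^\star)\|]\le \epsilon+\frac{1}{2\epsilon}L^2\sigma^2 d+\frac12\sigma^2 L d.$ *)

theory Defs
  imports "HOL-Probability.Probability"
begin

definition std_gaussian :: "(real^'n::finite) measure" where
  "std_gaussian = density lborel
     (\<lambda>z. ennreal ((2 * pi) powr (- real CARD('n) / 2) * exp (- (norm z)\<^sup>2 / 2)))"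

end

theory Submission
  imports Defs
begin



lemma std_nn_moment:
  "(\<integral>\<^sup>+x. ennreal (std_normal_density x * x ^ (2 * k)) \<partial>lborel) = ennreal (fact (2 * k) / (2^k * fact k))"
proof -
  have "integrable lborel (\<lambda>x. std_normal_density x * x ^ (2 * k))"
    using std_normal_moment_even[of k] by (simp add: has_bochner_integral_iff)
  moreover have "AE x in lborel. 0 \<le> std_normal_density x * x ^ (2 * k)"
    by (auto simp: normal_density_nonneg)
  ultimately show ?thesis
    using nn_integral_eq_integral integral_std_normal_moment_even by metis
qed

lemma std_nn_moment01:
  "k \<le> 1 \<Longrightarrow> (\<integral>\<^sup>+x. ennreal (std_normal_density x * x ^ (2 * k)) \<partial>lborel) = 1"
  using std_nn_moment[of k] by (cases k) auto

definition gdens :: "real^'n::finite \<Rightarrow> real" where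
  "gdens z = (2 * pi) powr (- real CARD('n) / 2) * exp (- (norm z)\<^sup>2 / 2)"

lemma card_Basis_vec: "card (Basis :: (real^'n::finite) set) = CARD('n)"
  using DIM_cart[where 'a=real and 'b='n] by simp

lemma gdens_prod:
  "gdens (z::real^'n::finite) = (\<Prod>b\<in>Basis. std_normal_density (z \<bullet> b))"
proof -
  have n: "(norm z)\<^sup>2 = (\<Sum>b\<in>Basis. (z \<bullet> b)\<^sup>2)"
  proof -
    have "(norm z)\<^sup>2 = z \<bullet> z" by (simp add: power2_norm_eq_inner)
    also have "\<dots> = (\<Sum>b\<in>Basis. (z \<bullet> b)\<^sup>2)"
      by (subst euclidean_inner) (simp add: power2_eq_square)
    finally show ?thesis .
  qed
  have "(\<Prod>b\<in>Basis. std_normal_density (z \<bullet> b)) =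
     (\<Prod>b\<in>(Basis::(real^'n) set). 1 / sqrt (2 * pi)) * (\<Prod>b\<in>Basis. exp (- (z \<bullet> b)\<^sup>2 / 2))"
    by (subst prod.distrib[symmetric]) (simp add: std_normal_density_def)
  also have "(\<Prod>b\<in>Basis. exp (- (z \<bullet> b)\<^sup>2 / 2)) = exp (- (norm z)\<^sup>2 / 2)"
    by (simp add: n exp_sum[symmetric] sum_negf sum_divide_distrib)
  also have "(\<Prod>b\<in>(Basis::(real^'n) set). 1 / sqrt (2 * pi)) = (2 * pi) powr (- real CARD('n) / 2)"
  proof -
    have "(\<Prod>b\<in>(Basis::(real^'n) set). 1 / sqrt (2 * pi)) = (1 / sqrt (2*pi)) ^ CARD('n)"
      by (simp add: card_Basis_vec)
    also have "\<dots> = ((2*pi) powr (-1/2)) ^ CARD('n)"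
      by (simp add: powr_minus_divide powr_half_sqrt[symmetric])
    also have "\<dots> = (2 * pi) powr (- real CARD('n) / 2)"
      by (simp add: powr_realpow[symmetric] powr_powr)
    finally show ?thesis .
  qed
  finally show ?thesis by (simp add: gdens_def)
qed

lemma gdens_nonneg: "0 \<le> gdens z"
  by (simp add: gdens_def)

lemma gauss_moment_aux:
  assumes "\<And>b. kk b \<le> (1::nat)"
  shows "(\<integral>\<^sup>+ z. ennreal (\<Prod>b\<in>Basis. std_normal_density ((z::real^'n::finite) \<bullet> b) * (z \<bullet> b) ^ (2 * kk b)) \<partial>lborel) = 1"
proof -
  have "(\<integral>\<^sup>+ z. ennreal (\<Prod>b\<in>Basis. std_normal_density ((z::real^'n::finite) \<bullet> b) * (z \<bullet> b) ^ (2 * kk b)) \<partial>lborel)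
     = (\<integral>\<^sup>+ z. (\<Prod>b\<in>Basis. ennreal (std_normal_density ((z::real^'n::finite) \<bullet> b) * (z \<bullet> b) ^ (2 * kk b))) \<partial>lborel)"
    by (intro nn_integral_cong) (simp add: prod_ennreal normal_density_nonneg)
  also have "\<dots> = (\<Prod>b\<in>(Basis::(real^'n) set). \<integral>\<^sup>+x. ennreal (std_normal_density x * x ^ (2 * kk b)) \<partial>lborel)"
    by (rule nn_integral_lborel_prod) auto
  also have "\<dots> = 1" using assms by (simp add: std_nn_moment01)
  finally show ?thesis .
qed

lemma gauss_total: "(\<integral>\<^sup>+ z. ennreal (gdens (z::real^'n::finite)) \<partial>lborel) = 1"
proof -
  have "(\<integral>\<^sup>+ z. ennreal (gdens (z::real^'n::finite)) \<partial>lborel)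
     = (\<integral>\<^sup>+ z. ennreal (\<Prod>b\<in>Basis. std_normal_density ((z::real^'n::finite) \<bullet> b) * (z \<bullet> b) ^ (2 * (\<lambda>_. 0::nat) b)) \<partial>lborel)"
    by (simp add: gdens_prod)
  also have "\<dots> = 1" by (rule gauss_moment_aux) simp
  finally show ?thesis .
qed

lemma gauss_second: "(\<integral>\<^sup>+ z. ennreal (gdens (z::real^'n::finite) * (norm z)\<^sup>2) \<partial>lborel) = CARD('n)"
proof -
  have eq: "gdens z * (norm z)\<^sup>2 = (\<Sum>c\<in>Basis. \<Prod>b\<in>Basis. std_normal_density (z \<bullet> b) * (z \<bullet> b) ^ (2 * (if b = c then 1 else 0)))"
    for z :: "real^'n"
  proof -
    have "(\<Prod>b\<in>Basis. std_normal_density (z \<bullet> b) * (z \<bullet> b) ^ (2 * (if b = c then 1 else 0)))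
       = gdens z * (z \<bullet> c)\<^sup>2" if c: "c \<in> Basis" for c
    proof -
      have "(\<Prod>b\<in>Basis. std_normal_density (z \<bullet> b) * (z \<bullet> b) ^ (2 * (if b = c then 1 else 0)))
        = (\<Prod>b\<in>Basis. std_normal_density (z \<bullet> b)) * (\<Prod>b\<in>Basis. (z \<bullet> b) ^ (2 * (if b = c then 1 else 0)))"
        by (rule prod.distrib)
      also have "(\<Prod>b\<in>Basis. (z \<bullet> b) ^ (2 * (if b = c then 1 else 0))) = (\<Prod>b\<in>Basis. if b = c then (z \<bullet> b)\<^sup>2 else 1)"
        by (intro prod.cong) auto
      also have "\<dots> = (z \<bullet> c)\<^sup>2" using c by (simp add: prod.delta)
      finally show ?thesis by (simp add: gdens_prod)
    qed
    then have "(\<Sum>c\<in>Basis. \<Prod>b\<in>Basis. std_normal_density (z \<bullet> b) * (z \<bullet> b) ^ (2 * (if b = c then 1 else 0)))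
       = (\<Sum>c\<in>Basis. gdens z * (z \<bullet> c)\<^sup>2)" by (intro sum.cong) auto
    also have "\<dots> = gdens z * (\<Sum>c\<in>Basis. (z \<bullet> c)\<^sup>2)" by (simp add: sum_distrib_left)
    also have "(\<Sum>c\<in>Basis. (z \<bullet> c)\<^sup>2) = (norm z)\<^sup>2"
    proof -
      have "(norm z)\<^sup>2 = z \<bullet> z" by (simp add: power2_norm_eq_inner)
      also have "\<dots> = (\<Sum>b\<in>Basis. (z \<bullet> b)\<^sup>2)"
        by (subst euclidean_inner) (simp add: power2_eq_square)
      finally show ?thesis ..
    qed
    finally show ?thesis ..
  qed
  have "(\<integral>\<^sup>+ z. ennreal (gdens (z::real^'n::finite) * (norm z)\<^sup>2) \<partial>lborel)
     = (\<integral>\<^sup>+ z. (\<Sum>c\<in>Basis. ennreal (\<Prod>b\<in>Basis. std_normal_density ((z::real^'n) \<bullet> b) * (z \<bullet> b) ^ (2 * (if b = c then 1 else 0)))) \<partial>lborel)"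
    by (intro nn_integral_cong) (simp add: eq sum_ennreal prod_nonneg normal_density_nonneg del: power_Suc)
  also have "\<dots> = (\<Sum>c\<in>(Basis::(real^'n) set). \<integral>\<^sup>+ z. ennreal (\<Prod>b\<in>Basis. std_normal_density ((z::real^'n) \<bullet> b) * (z \<bullet> b) ^ (2 * (if b = c then 1 else 0))) \<partial>lborel)"
    by (rule nn_integral_sum) auto
  also have "\<dots> = (\<Sum>c\<in>(Basis::(real^'n) set). 1)"
    by (intro sum.cong refl gauss_moment_aux) auto
  also have "\<dots> = CARD('n)" by (simp add: card_Basis_vec)
  finally show ?thesis .
qed



lemma taylor2:
  fixes G :: "'a::real_normed_vector \<Rightarrow> 'b::real_normed_vector"
  assumes hess: "\<And>z. (G has_derivative blinfun_apply (H z)) (at z)"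
    and hess_lip: "\<And>z w. norm (H z - H w) \<le> L * norm (z - w)"
  shows "norm (G (z + h) - G z - blinfun_apply (H z) h) \<le> L / 2 * (norm h)\<^sup>2"
proof -
  define f where "f t = G (z + t *\<^sub>R h) - t *\<^sub>R blinfun_apply (H z) h" for t :: real
  define f' where "f' t = blinfun_apply (H (z + t *\<^sub>R h)) h - blinfun_apply (H z) h" for t :: real
  define \<phi> where "\<phi> t = L / 2 * (norm h)\<^sup>2 * t\<^sup>2" for t :: real
  define \<phi>' where "\<phi>' t = L * (norm h)\<^sup>2 * t" for t :: real
  have fd: "(f has_vector_derivative f' t) (at t)" for t
  proof -
    have d1: "((\<lambda>t. z + t *\<^sub>R h) has_derivative (\<lambda>s. s *\<^sub>R h)) (at t)"
      by (auto intro!: derivative_eq_intros)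
    have d2: "((\<lambda>t. G (z + t *\<^sub>R h)) has_derivative (\<lambda>s. blinfun_apply (H (z + t *\<^sub>R h)) (s *\<^sub>R h))) (at t)"
      using has_derivative_compose[OF d1 hess[of "z + t *\<^sub>R h"]] by simp
    have "(f has_derivative (\<lambda>s. blinfun_apply (H (z + t *\<^sub>R h)) (s *\<^sub>R h) - s *\<^sub>R blinfun_apply (H z) h)) (at t)"
    proof -
      have d3: "((\<lambda>t. t *\<^sub>R blinfun_apply (H z) h) has_derivative (\<lambda>s. s *\<^sub>R blinfun_apply (H z) h)) (at t)"
        by (auto intro!: derivative_eq_intros)
      have fe: "f = (\<lambda>t. G (z + t *\<^sub>R h) - t *\<^sub>R blinfun_apply (H z) h)" by (simp add: fun_eq_iff f_def)
      show ?thesis unfolding fe by (rule has_derivative_diff[OF d2 d3])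
    qed
    then show ?thesis
      by (simp add: has_vector_derivative_def f'_def blinfun.scaleR_right scaleR_diff_right)
  qed
  have pd: "(\<phi> has_vector_derivative \<phi>' t) (at t)" for t
    unfolding \<phi>_def \<phi>'_def has_vector_derivative_def
    by (auto intro!: derivative_eq_intros simp: algebra_simps power2_eq_square)
  have cf: "continuous_on {0..1} f"
    using fd by (meson continuous_at_imp_continuous_on has_vector_derivative_continuous)
  have cp: "continuous_on {0..1} \<phi>"
    using pd by (meson continuous_at_imp_continuous_on has_vector_derivative_continuous)
  have bnd: "norm (f' t) \<le> \<phi>' t" if "0 < t" for t
  proof -
    have "norm (f' t) = norm (blinfun_apply (H (z + t *\<^sub>R h) - H z) h)"
      by (simp add: f'_def blinfun.diff_left)
    also have "\<dots> \<le> norm (H (z + t *\<^sub>R h) - H z) * norm h" by (rule norm_blinfun)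
    also have "\<dots> \<le> L * norm (t *\<^sub>R h) * norm h"
      using hess_lip[of "z + t *\<^sub>R h" z] by (intro mult_right_mono) auto
    also have "\<dots> = \<phi>' t" using that by (simp add: \<phi>'_def power2_eq_square)
    finally show ?thesis .
  qed
  have "norm (f 1 - f 0) \<le> \<phi> 1 - \<phi> 0"
    by (rule differentiable_bound_general[OF _ cf cp fd pd bnd]) auto
  then show ?thesis by (simp add: f_def \<phi>_def algebra_simps)
qed

lemma deriv_bound:
  fixes G :: "'a::real_normed_vector \<Rightarrow> 'b::real_normed_vector"
  assumes hess: "\<And>z. (G has_derivative blinfun_apply (H z)) (at z)"
    and hess_lip: "\<And>z w. norm (H z - H w) \<le> L * norm (z - w)"
    and grad_lip: "\<And>z w. norm (G z - G w) \<le> L * norm (z - w)"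
  shows "norm (blinfun_apply (H z) h) \<le> L * norm h"
proof (cases "h = 0")
  case True then show ?thesis by simp
next
  case False
  have L0: "0 \<le> L"
  proof -
    have "0 \<le> L * norm (h - 0)" by (rule order_trans[OF norm_ge_zero grad_lip[of h 0]])
    moreover have "0 < norm h" using False by simp
    ultimately show ?thesis by (simp add: zero_le_mult_iff)
  qed
  show ?thesis
proof (rule field_le_epsilon)
  fix e :: real assume e: "0 < e"
  show "norm (blinfun_apply (H z) h) \<le> L * norm h + e"
  proof -
    define c where "c = L / 2 * (norm h)\<^sup>2"
    have c0: "0 \<le> c" using L0 by (simp add: c_def)
    define t where "t = e / (c + 1)"
    have t0: "0 < t" using e c0 by (simp add: t_def)
    have tc: "t * c \<le> e" using e c0 by (simp add: t_def field_simps)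
    have "t * norm (blinfun_apply (H z) h) = norm (blinfun_apply (H z) (t *\<^sub>R h))"
      using t0 by (simp add: blinfun.scaleR_right)
    also have "\<dots> \<le> norm (G (z + t *\<^sub>R h) - G z) + norm (G (z + t *\<^sub>R h) - G z - blinfun_apply (H z) (t *\<^sub>R h))"
      by (metis add.commute add_diff_cancel_left' diff_add_cancel norm_triangle_ineq4)
    also have "\<dots> \<le> L * norm (t *\<^sub>R h) + L / 2 * (norm (t *\<^sub>R h))\<^sup>2"
      using grad_lip[of "z + t *\<^sub>R h" z] taylor2[OF hess hess_lip, of z "t *\<^sub>R h"]
      by (intro add_mono) auto
    also have "\<dots> = t * (L * norm h + t * c)"
      using t0 by (simp add: c_def power2_eq_square algebra_simps)
    finally have "norm (blinfun_apply (H z) h) \<le> L * norm h + t * c"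
      using t0 by simp
    then show ?thesis using tc by linarith
  qed
qed
qed


lemma norm_snd_le: "norm (snd x) \<le> norm x"
  by (metis norm_Pair prod.collapse real_sqrt_sum_squares_ge2)

lemma para_ineq:
  fixes u w :: "'a::real_inner"
  assumes "norm u \<le> e" "0 < e"
  shows "norm (u + w) + norm (u - w) \<le> 2 * e + (norm w)\<^sup>2 / e"
proof -
  have pl: "(norm (u + w))\<^sup>2 + (norm (u - w))\<^sup>2 = 2 * (norm u)\<^sup>2 + 2 * (norm w)\<^sup>2"
    by (simp add: power2_norm_eq_inner inner_add_left inner_add_right inner_diff_left inner_diff_right inner_commute)
  have u2: "(norm u)\<^sup>2 \<le> e\<^sup>2" using assms by (intro power_mono) auto
  have "(norm (u + w) + norm (u - w))\<^sup>2 \<le> 2 * ((norm (u + w))\<^sup>2 + (norm (u - w))\<^sup>2)"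
  proof -
    have "0 \<le> (norm (u + w) - norm (u - w))\<^sup>2" by simp
    then show ?thesis by (simp add: power2_eq_square algebra_simps)
  qed
  also have "\<dots> \<le> 4 * (e\<^sup>2 + (norm w)\<^sup>2)" unfolding pl using u2 by (simp add: algebra_simps)
  also have "\<dots> \<le> (2 * e + (norm w)\<^sup>2 / e)\<^sup>2"
  proof -
    define a where "a = (norm w)\<^sup>2 / e"
    have ea: "(norm w)\<^sup>2 = e * a" using assms(2) by (simp add: a_def)
    have sq: "(2 * e + a)\<^sup>2 = 4 * e\<^sup>2 + 4 * (e * a) + a\<^sup>2" by (simp add: power2_eq_square algebra_simps)
    have "0 \<le> a\<^sup>2" by simp
    then have "4 * (e\<^sup>2 + e * a) \<le> (2 * e + a)\<^sup>2" unfolding sq by (simp add: algebra_simps)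
    moreover have g: "(norm w)\<^sup>2 / e = a" by (simp add: a_def)
    ultimately show ?thesis unfolding g by (subst ea)
  qed
  finally have sqle: "(norm (u + w) + norm (u - w))\<^sup>2 \<le> (2 * e + (norm w)\<^sup>2 / e)\<^sup>2" .
  have "0 \<le> (norm w)\<^sup>2 / e" using assms(2) by simp
  then have "0 \<le> 2 * e + (norm w)\<^sup>2 / e" using assms(2) by linarith
  then show ?thesis by (rule power2_le_imp_le[OF sqle])
qed

lemma lborel_neg:
  fixes g :: "'a::euclidean_space \<Rightarrow> ennreal"
  assumes [measurable]: "g \<in> borel_measurable borel"
  shows "(\<integral>\<^sup>+x. g x \<partial>lborel) = (\<integral>\<^sup>+x. g (- x) \<partial>lborel)"
  by (subst lborel_affine[of "-1" 0]) (simp_all add: nn_integral_density nn_integral_distr)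

lemma std_gaussian_eq: "std_gaussian = density lborel (\<lambda>z. ennreal (gdens z))"
  by (simp add: std_gaussian_def gdens_def)

lemma gdens_neg: "gdens (- z) = gdens z" by (simp add: gdens_def)

lemma gdens_meas[measurable]: "gdens \<in> borel_measurable borel"
  unfolding gdens_def by measurable

theorem lemmaA2:
  fixes f :: "(real^'n::finite) \<times> (real^'n) \<Rightarrow> real"
    and G :: "(real^'n) \<times> (real^'n) \<Rightarrow> (real^'n) \<times> (real^'n)"
    and H :: "(real^'n) \<times> (real^'n) \<Rightarrow> ((real^'n) \<times> (real^'n)) \<Rightarrow>\<^sub>L ((real^'n) \<times> (real^'n))"
    and L \<epsilon> \<sigma> :: real
    and xs ys :: "real^'n"
  assumes grad: "\<And>z. (f has_derivative (\<lambda>h. G z \<bullet> h)) (at z)"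
    and hess: "\<And>z. (G has_derivative blinfun_apply (H z)) (at z)"
    and hess_cont: "continuous_on UNIV H"
    and grad_lip: "\<And>z w. norm (G z - G w) \<le> L * norm (z - w)"
    and hess_lip: "\<And>z w. norm (H z - H w) \<le> L * norm (z - w)"
    and eps_pos: "\<epsilon> > 0"
    and sigma_pos: "\<sigma> > 0"
    and small_grad: "norm (snd (G (xs, ys))) \<le> \<epsilon>"
  shows "(\<integral>\<^sup>+ \<zeta>. ennreal (norm (snd (G (xs + \<sigma> *\<^sub>R \<zeta>, ys)))) \<partial>std_gaussian)
           \<le> ennreal (\<epsilon> + (1 / (2 * \<epsilon>)) * L\<^sup>2 * \<sigma>\<^sup>2 * real CARD('n)
                     + (1/2) * \<sigma>\<^sup>2 * L * real CARD('n))"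
  proof -
  define K where "K = \<sigma>\<^sup>2 * L\<^sup>2 / (2 * \<epsilon>) + \<sigma>\<^sup>2 * L / 2"
  define \<phi> where "\<phi> \<zeta> = norm (snd (G (xs + \<sigma> *\<^sub>R \<zeta>, ys)))" for \<zeta>
  have L0: "0 \<le> L"
  proof -
    have "norm ((1::real^'n, 0::real^'n) - (0, 0)) > 0" by simp
    moreover have "0 \<le> L * norm ((1::real^'n, 0::real^'n) - (0, 0))"
      by (rule order_trans[OF norm_ge_zero grad_lip[of "(1, 0)" "(0, 0)"]])
    ultimately show ?thesis by (simp add: zero_le_mult_iff)
  qed
  have K0: "0 \<le> K" using L0 eps_pos by (simp add: K_def)
  have Gc: "continuous_on UNIV G"
    using hess by (meson continuous_at_imp_continuous_on has_derivative_continuous)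
  have \<phi>c: "continuous_on UNIV \<phi>"
    unfolding \<phi>_def
    by (intro continuous_intros continuous_on_compose2[OF Gc]) auto
  have \<phi>m[measurable]: "\<phi> \<in> borel_measurable borel"
    by (rule borel_measurable_continuous_onI[OF \<phi>c])
  have pw: "\<phi> \<zeta> + \<phi> (- \<zeta>) \<le> 2 * (\<epsilon> + K * (norm \<zeta>)\<^sup>2)" for \<zeta>
  proof -
    define z0 where "z0 = (xs, ys)"
    define h where "h = (\<sigma> *\<^sub>R \<zeta>, 0::real^'n)"
    define u where "u = snd (G z0)"
    define w where "w = snd (blinfun_apply (H z0) h)"
    define r1 where "r1 = G (z0 + h) - G z0 - blinfun_apply (H z0) h"
    define r2 where "r2 = G (z0 + - h) - G z0 - blinfun_apply (H z0) (- h)"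
    have nh: "norm h = \<sigma> * norm \<zeta>"
      using sigma_pos by (simp add: h_def norm_Pair)
    have e1: "\<phi> \<zeta> = norm (u + w + snd r1)"
      by (simp add: \<phi>_def u_def w_def r1_def z0_def h_def)
    have e2: "\<phi> (- \<zeta>) = norm (u - w + snd r2)"
    proof -
      have "u - w + snd r2 = snd (G (z0 + - h))"
        by (simp add: u_def w_def r2_def blinfun.minus_right)
      then show ?thesis by (simp add: \<phi>_def z0_def h_def)
    qed
    have r1b: "norm (snd r1) \<le> L / 2 * (norm h)\<^sup>2"
      using taylor2[OF hess hess_lip, of z0 h] norm_snd_le[of r1] by (simp add: r1_def)
    have r2b: "norm (snd r2) \<le> L / 2 * (norm h)\<^sup>2"
      using taylor2[OF hess hess_lip, of z0 "- h"] norm_snd_le[of r2] by (simp add: r2_def)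
    have wb: "norm w \<le> L * norm h"
      using deriv_bound[OF hess hess_lip grad_lip, of z0 h] norm_snd_le[of "blinfun_apply (H z0) h"]
      by (simp add: w_def)
    have w2: "(norm w)\<^sup>2 \<le> (L * norm h)\<^sup>2"
      using wb by (intro power_mono) auto
    have ub: "norm u \<le> \<epsilon>" using small_grad by (simp add: u_def z0_def)
    have "\<phi> \<zeta> + \<phi> (- \<zeta>) \<le> (norm (u + w) + norm (snd r1)) + (norm (u - w) + norm (snd r2))"
      unfolding e1 e2 by (intro add_mono norm_triangle_ineq)
    also have "\<dots> \<le> (2 * \<epsilon> + (norm w)\<^sup>2 / \<epsilon>) + L * (norm h)\<^sup>2"
      using para_ineq[OF ub eps_pos, of w] r1b r2b by linarith
    also have "\<dots> \<le> (2 * \<epsilon> + (L * norm h)\<^sup>2 / \<epsilon>) + L * (norm h)\<^sup>2"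
      using w2 eps_pos by (simp add: divide_right_mono)
    also have "\<dots> = 2 * (\<epsilon> + K * (norm \<zeta>)\<^sup>2)"
      using eps_pos by (simp add: nh K_def field_simps power2_eq_square)
    finally show ?thesis .
  qed
  have sym: "(\<integral>\<^sup>+ \<zeta>. ennreal (\<phi> (- \<zeta>)) \<partial>std_gaussian) = (\<integral>\<^sup>+ \<zeta>. ennreal (\<phi> \<zeta>) \<partial>std_gaussian)"
  proof -
    have "(\<integral>\<^sup>+ \<zeta>. ennreal (\<phi> (- \<zeta>)) \<partial>std_gaussian) = (\<integral>\<^sup>+ \<zeta>. ennreal (gdens \<zeta>) * ennreal (\<phi> (- \<zeta>)) \<partial>lborel)"
      unfolding std_gaussian_eq by (subst nn_integral_density) auto
    also have "\<dots> = (\<integral>\<^sup>+ \<zeta>. ennreal (gdens (- \<zeta>)) * ennreal (\<phi> (- \<zeta>)) \<partial>lborel)"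
      by (simp add: gdens_neg)
    also have "\<dots> = (\<integral>\<^sup>+ \<zeta>. ennreal (gdens \<zeta>) * ennreal (\<phi> \<zeta>) \<partial>lborel)"
      by (rule lborel_neg[symmetric]) measurable
    also have "\<dots> = (\<integral>\<^sup>+ \<zeta>. ennreal (\<phi> \<zeta>) \<partial>std_gaussian)"
      unfolding std_gaussian_eq by (subst nn_integral_density) auto
    finally show ?thesis .
  qed
  have "(\<integral>\<^sup>+ \<zeta>. ennreal (\<phi> \<zeta>) \<partial>std_gaussian)
      = (\<integral>\<^sup>+ \<zeta>. (ennreal (1/2) * ennreal (\<phi> \<zeta>) + ennreal (1/2) * ennreal (\<phi> (- \<zeta>))) \<partial>std_gaussian)"
  proof -
    have "(\<integral>\<^sup>+ \<zeta>. (ennreal (1/2) * ennreal (\<phi> \<zeta>) + ennreal (1/2) * ennreal (\<phi> (- \<zeta>))) \<partial>std_gaussian)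
      = ennreal (1/2) * (\<integral>\<^sup>+ \<zeta>. ennreal (\<phi> \<zeta>) \<partial>std_gaussian) + ennreal (1/2) * (\<integral>\<^sup>+ \<zeta>. ennreal (\<phi> (- \<zeta>)) \<partial>std_gaussian)"
      by (subst nn_integral_add) (auto simp: std_gaussian_eq nn_integral_cmult)
    also have "\<dots> = (ennreal (1/2) + ennreal (1/2)) * (\<integral>\<^sup>+ \<zeta>. ennreal (\<phi> \<zeta>) \<partial>std_gaussian)"
      by (simp add: sym distrib_right)
    also have "ennreal (1/2) + ennreal (1/2) = 1"
      by (subst ennreal_plus[symmetric]) auto
    finally show ?thesis by simp
  qed
  also have "\<dots> \<le> (\<integral>\<^sup>+ \<zeta>. ennreal (\<epsilon> + K * (norm (\<zeta>::real^'n))\<^sup>2) \<partial>std_gaussian)"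
  proof -
  have pt: "ennreal (1/2) * ennreal (\<phi> \<zeta>) + ennreal (1/2) * ennreal (\<phi> (- \<zeta>)) \<le> ennreal (\<epsilon> + K * (norm \<zeta>)\<^sup>2)" for \<zeta>
  proof -
    have "ennreal (1/2) * ennreal (\<phi> \<zeta>) + ennreal (1/2) * ennreal (\<phi> (- \<zeta>)) = ennreal ((\<phi> \<zeta> + \<phi> (- \<zeta>)) / 2)"
    proof -
      have a0: "0 \<le> \<phi> \<zeta>" "0 \<le> \<phi> (- \<zeta>)" by (simp_all add: \<phi>_def)
      have m1: "ennreal (1/2) * ennreal (\<phi> \<zeta>) = ennreal (\<phi> \<zeta> / 2)"
        using a0 by (subst ennreal_mult[symmetric]) auto
      have m2: "ennreal (1/2) * ennreal (\<phi> (- \<zeta>)) = ennreal (\<phi> (- \<zeta>) / 2)"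
        using a0 by (subst ennreal_mult[symmetric]) auto
      have m3: "ennreal (\<phi> \<zeta> / 2) + ennreal (\<phi> (- \<zeta>) / 2) = ennreal (\<phi> \<zeta> / 2 + \<phi> (- \<zeta>) / 2)"
        using a0 by (subst ennreal_plus) auto
      show ?thesis unfolding m1 m2 m3 by (simp add: add_divide_distrib)
    qed
    also have "\<dots> \<le> ennreal (\<epsilon> + K * (norm \<zeta>)\<^sup>2)"
      using pw[of \<zeta>] by (intro ennreal_leI) simp
    finally show "ennreal (1/2) * ennreal (\<phi> \<zeta>) + ennreal (1/2) * ennreal (\<phi> (- \<zeta>)) \<le> ennreal (\<epsilon> + K * (norm \<zeta>)\<^sup>2)" .
  qed
  show ?thesis by (intro nn_integral_mono pt)
  qed
  also have "\<dots> = ennreal (\<epsilon> + K * real CARD('n))"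
  proof -
    have "(\<integral>\<^sup>+ \<zeta>. ennreal (\<epsilon> + K * (norm (\<zeta>::real^'n))\<^sup>2) \<partial>std_gaussian)
       = (\<integral>\<^sup>+ \<zeta>. ennreal (gdens (\<zeta>::real^'n)) * ennreal (\<epsilon> + K * (norm \<zeta>)\<^sup>2) \<partial>lborel)"
      unfolding std_gaussian_eq by (subst nn_integral_density) auto
    also have "\<dots> = (\<integral>\<^sup>+ \<zeta>. (ennreal \<epsilon> * ennreal (gdens (\<zeta>::real^'n)) + ennreal K * ennreal (gdens \<zeta> * (norm \<zeta>)\<^sup>2)) \<partial>lborel)"
    proof (intro nn_integral_cong)
      fix \<zeta> :: "real^'n"
      have g0: "0 \<le> gdens \<zeta>" by (rule gdens_nonneg)
      have "ennreal (gdens \<zeta>) * ennreal (\<epsilon> + K * (norm \<zeta>)\<^sup>2) = ennreal (gdens \<zeta> * (\<epsilon> + K * (norm \<zeta>)\<^sup>2))"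
        using g0 eps_pos K0 by (subst ennreal_mult[symmetric]) auto
      also have "gdens \<zeta> * (\<epsilon> + K * (norm \<zeta>)\<^sup>2) = \<epsilon> * gdens \<zeta> + K * (gdens \<zeta> * (norm \<zeta>)\<^sup>2)"
        by (simp add: algebra_simps)
      also have "ennreal (\<epsilon> * gdens \<zeta> + K * (gdens \<zeta> * (norm \<zeta>)\<^sup>2)) = ennreal (\<epsilon> * gdens \<zeta>) + ennreal (K * (gdens \<zeta> * (norm \<zeta>)\<^sup>2))"
        using g0 eps_pos K0 by (subst ennreal_plus) auto
      also have "\<dots> = ennreal \<epsilon> * ennreal (gdens \<zeta>) + ennreal K * ennreal (gdens \<zeta> * (norm \<zeta>)\<^sup>2)"
        using g0 eps_pos K0 by (simp add: ennreal_mult)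
      finally show "ennreal (gdens \<zeta>) * ennreal (\<epsilon> + K * (norm \<zeta>)\<^sup>2) = ennreal \<epsilon> * ennreal (gdens \<zeta>) + ennreal K * ennreal (gdens \<zeta> * (norm \<zeta>)\<^sup>2)" .
    qed
    also have "\<dots> = ennreal \<epsilon> * (\<integral>\<^sup>+ \<zeta>. ennreal (gdens (\<zeta>::real^'n)) \<partial>lborel) + ennreal K * (\<integral>\<^sup>+ \<zeta>. ennreal (gdens (\<zeta>::real^'n) * (norm \<zeta>)\<^sup>2) \<partial>lborel)"
      by (subst nn_integral_add) (auto simp: nn_integral_cmult)
    also have "\<dots> = ennreal (\<epsilon> + K * real CARD('n))"
    proof -
      have "ennreal \<epsilon> * (\<integral>\<^sup>+ \<zeta>. ennreal (gdens (\<zeta>::real^'n)) \<partial>lborel) + ennreal K * (\<integral>\<^sup>+ \<zeta>. ennreal (gdens (\<zeta>::real^'n) * (norm \<zeta>)\<^sup>2) \<partial>lborel)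
         = ennreal \<epsilon> + ennreal K * ennreal (real CARD('n))"
        unfolding gauss_total gauss_second by (simp add: ennreal_of_nat_eq_real_of_nat)
      also have "\<dots> = ennreal (\<epsilon> + K * real CARD('n))"
        using eps_pos K0 by (simp add: ennreal_mult ennreal_plus)
      finally show ?thesis .
    qed
    finally show ?thesis .
  qed
  also have "\<epsilon> + K * real CARD('n) = \<epsilon> + (1 / (2 * \<epsilon>)) * L\<^sup>2 * \<sigma>\<^sup>2 * real CARD('n)
                     + (1/2) * \<sigma>\<^sup>2 * L * real CARD('n)"
    using eps_pos by (simp add: K_def field_simps power2_eq_square)
  finally have fin: "(\<integral>\<^sup>+ \<zeta>. ennreal (\<phi> \<zeta>) \<partial>std_gaussian) \<le> ennreal (\<epsilon> + (1 / (2 * \<epsilon>)) * L\<^sup>2 * \<sigma>\<^sup>2 * real CARD('n)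
                     + (1/2) * \<sigma>\<^sup>2 * L * real CARD('n))" .
  then show ?thesis by (simp only: \<phi>_def)
qed

end
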